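(* For every prime $q$, let $S_q=\{d+q\mathbb{Z}: d\in\mathbb{Z}_{>0},\ d\mid\prod_{p<q}p\}\subseteq(\mathbb{Z}/q\mathbb{Z})^\times$, where the product is over primes $p<q$. Then $\#S_q>\frac12(q-1)$.
   Context: $S_q$ is the set of residue classes modulo $q$ attained by the squarefree positive integers all of whose prime factors are less than $q$. *)

theory Defs
  imports "HOL-Computational_Algebra.Primes"
begin

definition primorial_below :: "nat \<Rightarrow> nat" where
  "primorial_below q = (\<Prod>p\<in>{p. prime p \<and> p < q}. p)"

text \<open>S_q: residue classes mod q (represented by their least nonnegative
  residue) of positive divisors of the product of primes below q.\<close>
definition S :: "nat \<Rightarrow> nat set" where
  "S q = {d mod q | d. d > 0 \<and> d dvd primorial_below q}"

end

theory Submission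
  imports Defs Complex_Main
begin

definition sqf :: "nat \<Rightarrow> bool" where
  "sqf k \<longleftrightarrow> (\<forall>p::nat. prime p \<longrightarrow> \<not> p^2 dvd k)"

lemma sqf_dvd_primorial:
  assumes "k > 0" "sqf k" "k < q"
  shows "k dvd primorial_below q"
proof (rule multiplicity_le_imp_dvd)
  show "k \<noteq> 0" using assms by simp
  have fin: "finite {p::nat. prime p \<and> p < q}" by (rule finite_subset[of _ "{..<q}"]) auto
  have P0: "primorial_below q \<noteq> 0"
    unfolding primorial_below_def by (simp add: prime_gt_0_nat)
  fix p :: nat assume p: "prime p"
  show "multiplicity p k \<le> multiplicity p (primorial_below q)"
  proof (cases "p dvd k")
    case False
    then show ?thesis by (simp add: not_dvd_imp_multiplicity_0)
  next
    case True
    have "\<not> p^2 dvd k" using assms(2) p unfolding sqf_def by blast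
    hence "multiplicity p k < 2"
      using assms(1) p by (intro multiplicity_lessI) auto
    moreover have "p \<le> k" using True assms(1) by (simp add: dvd_imp_le)
    hence "p < q" using assms(3) by simp
    hence "p dvd primorial_below q" unfolding primorial_below_def
      using p fin by (intro dvd_prodI) auto
    hence "p^1 dvd primorial_below q" by simp
    hence "1 \<le> multiplicity p (primorial_below q)"
      using P0 p by (intro multiplicity_geI) auto
    ultimately show ?thesis by linarith
  qed
qed

lemma card_multiples:
  assumes "d > (0::nat)"
  shows "card {k\<in>{1..n}. d dvd k} = n div d"
proof -
  have "{k\<in>{1..n}. d dvd k} = (\<lambda>i. d*i) ` {1..n div d}"
  proof (intro equalityI subsetI)
    fix k assume k: "k \<in> {k\<in>{1..n}. d dvd k}"
    then obtain i where i: "k = d*i" by auto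
    have "i \<ge> 1" using k i by (cases i) auto
    moreover have "i \<le> n div d" using k i assms
      by (metis (no_types, lifting) atLeastAtMost_iff mem_Collect_eq div_le_mono nonzero_mult_div_cancel_left not_gr0)
    ultimately show "k \<in> (\<lambda>i. d*i) ` {1..n div d}" using i by auto
  next
    fix k assume "k \<in> (\<lambda>i. d*i) ` {1..n div d}"
    then obtain i where i0: "i \<in> {1..n div d}" "k = d*i" by blast
    hence i: "k = d*i" "1 \<le> i" "i \<le> n div d" by auto
    have "d * i \<le> d * (n div d)" using i by simp
    also have "\<dots> \<le> n" by simp
    finally show "k \<in> {k\<in>{1..n}. d dvd k}" using i assms by auto
  qed
  moreover have "inj_on (\<lambda>i. d*i) {1..n div d}" using assms by (auto simp: inj_on_def)
  ultimately show ?thesis by (simp add: card_image)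
qed

lemma odd_sum_bound:
  fixes K :: nat shows
  "(\<Sum>j=1..K. 1 / real ((2*j+1)^2)) \<le> (1/4::real) - 1/(4 * real (K+1))"
proof (induction K)
  case 0
  then show ?case by simp
next
  case (Suc K)
  have key: "1 / real ((2*(Suc K)+1)^2) \<le> 1/(4 * real (K+1)) - 1/(4*real (Suc K + 1))"
  proof -
    have e: "1/(4 * real (K+1)) - 1/(4*real (Suc K + 1)) = 1 / (4 * real (K+1) * real (K+2))"
    proof -
      have a: "real (K+1) > 0" "real (K+2) > 0" "real (Suc K + 1) = real (K+2)" by auto
      show ?thesis using a by (simp add: divide_simps del: of_nat_add of_nat_Suc)
    qed
    have "real (4*(K+1)*(K+2)) \<le> real ((2*(Suc K)+1)^2)"
      by (simp only: of_nat_le_iff) (simp add: power2_eq_square algebra_simps)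
    hence "4 * real (K+1) * real (K+2) \<le> real ((2*(Suc K)+1)^2)"
      by (simp only: of_nat_mult of_nat_numeral)
    hence "1 / real ((2*(Suc K)+1)^2) \<le> 1 / (4 * real (K+1) * real (K+2))"
      by (intro divide_left_mono) auto
    thus ?thesis using e by simp
  qed
  show ?case using Suc key by simp
qed

lemma div_real_le: "real ((n::nat) div m) \<le> real n / real m"
proof (cases "m = 0")
  case False
  have "real (n div m * m) \<le> real n" by (simp only: of_nat_le_iff div_times_less_eq_dividend)
  hence "real (n div m) * real m \<le> real n" by simp
  thus ?thesis using False by (simp add: field_simps)
qed simp

lemma many_sqf:
  assumes "n \<ge> 1"
  shows "2 * card {k\<in>{1..n}. sqf k} > n"
proof -
  define SF where "SF = {k\<in>{1..n}. sqf k}"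
  define NS where "NS = {k\<in>{1..n}. \<not> sqf k}"
  have part: "card SF + card NS = n"
  proof -
    have "SF \<union> NS = {1..n}" "SF \<inter> NS = {}" unfolding SF_def NS_def by auto
    hence "card (SF \<union> NS) = card SF + card NS"
      by (intro card_Un_disjoint) (auto simp: SF_def NS_def)
    with \<open>SF \<union> NS = {1..n}\<close> show ?thesis by simp
  qed
  have sub: "NS \<subseteq> {k\<in>{1..n}. 2^2 dvd k} \<union> (\<Union>j\<in>{1..n}. {k\<in>{1..n}. (2*j+1)^2 dvd k})"
  proof
    fix k assume k: "k \<in> NS"
    have kn: "k \<in> {1..n}" and nk: "\<not> sqf k" using k unfolding NS_def by auto
    from nk obtain p :: nat where p: "prime p" "p^2 dvd k" unfolding sqf_def by blast
    have "p \<le> p^2" by (simp add: power2_eq_square)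
    also have "p^2 \<le> k" using p kn by (intro dvd_imp_le) auto
    finally have pk: "p \<le> n" using kn by simp
    show "k \<in> {k\<in>{1..n}. 2^2 dvd k} \<union> (\<Union>j\<in>{1..n}. {k\<in>{1..n}. (2*j+1)^2 dvd k})"
    proof (cases "p = 2")
      case True
      have "2^2 dvd k" using p(2) unfolding True .
      hence "k \<in> {k\<in>{1..n}. 2^2 dvd k}" using kn by (intro CollectI conjI)
      thus ?thesis by (rule UnI1)
    next
      case False
      have "p \<ge> 2" by (rule prime_ge_2_nat[OF p(1)])
      with False have "p > 2" by linarith
      hence "odd p" by (rule prime_odd_nat[OF p(1)])
      then obtain j where j: "p = 2*j+1" using oddE by blast
      have "j \<noteq> 0"
      proof
        assume "j = 0"
        hence "p = 1" using j by simp
        thus False using p(1) by simp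
      qed
      hence jn: "j \<in> {1..n}" using j pk by (simp only: atLeastAtMost_iff) linarith
      have "(2*j+1)^2 dvd k" using p(2) unfolding j .
      hence "k \<in> {k\<in>{1..n}. (2*j+1)^2 dvd k}" using kn by (intro CollectI conjI)
      with jn have "k \<in> (\<Union>j\<in>{1..n}. {k\<in>{1..n}. (2*j+1)^2 dvd k})" by (rule UN_I)
      thus ?thesis by (rule UnI2)
    qed
  qed
  have "card NS \<le> card ({k\<in>{1..n}. 2^2 dvd k} \<union> (\<Union>j\<in>{1..n}. {k\<in>{1..n}. (2*j+1)^2 dvd k}))"
    by (intro card_mono sub) auto
  also have "\<dots> \<le> card {k\<in>{1..n}. 2^2 dvd k} + card (\<Union>j\<in>{1..n}. {k\<in>{1..n}. (2*j+1)^2 dvd k})"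
    by (rule card_Un_le)
  also have "\<dots> \<le> n div 4 + (\<Sum>j\<in>{1..n}. card {k\<in>{1..n}. (2*j+1)^2 dvd k})"
  proof (rule add_mono)
    show "card {k\<in>{1..n}. 2^2 dvd k} \<le> n div 4" using card_multiples[of "2^2" n] by simp
    show "card (\<Union>j\<in>{1..n}. {k\<in>{1..n}. (2*j+1)^2 dvd k}) \<le> (\<Sum>j\<in>{1..n}. card {k\<in>{1..n}. (2*j+1)^2 dvd k})"
      by (rule card_UN_le) simp
  qed
  also have "\<dots> = n div 4 + (\<Sum>j\<in>{1..n}. n div (2*j+1)^2)"
  proof -
    have "\<And>j. card {k\<in>{1..n}. (2*j+1)^2 dvd k} = n div (2*j+1)^2"
      by (rule card_multiples) simp
    thus ?thesis by simp
  qed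
  finally have NSb: "card NS \<le> n div 4 + (\<Sum>j\<in>{1..n}. n div (2*j+1)^2)" .
  have "real (card NS) \<le> real (n div 4 + (\<Sum>j\<in>{1..n}. n div (2*j+1)^2))"
    using NSb by (simp only: of_nat_le_iff)
  also have "\<dots> = real (n div 4) + (\<Sum>j\<in>{1..n}. real (n div (2*j+1)^2))"
    by (simp only: of_nat_add of_nat_sum)
  also have "\<dots> \<le> real n / 4 + (\<Sum>j\<in>{1..n}. real n * (1 / real ((2*j+1)^2)))"
  proof (intro add_mono sum_mono)
    show "real (n div 4) \<le> real n / 4" using div_real_le[of n 4] by simp
  next
    fix j show "real (n div (2*j+1)^2) \<le> real n * (1 / real ((2*j+1)^2))"
      using div_real_le[of n "(2*j+1)^2"] by simp
  qed
  also have "\<dots> = real n / 4 + real n * (\<Sum>j=1..n. 1 / real ((2*j+1)^2))"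
    by (simp add: sum_distrib_left)
  also have "\<dots> \<le> real n / 4 + real n * (1/4 - 1/(4 * real (n+1)))"
    by (intro add_left_mono mult_left_mono odd_sum_bound) auto
  also have "\<dots> < real n / 2"
  proof -
    have "real n * (1/(4 * real (n+1))) > 0" using assms by simp
    moreover have "real n * (1/4 - 1/(4 * real (n+1))) = real n/4 - real n * (1/(4 * real (n+1)))"
      by (simp only: right_diff_distrib)
    ultimately show ?thesis by linarith
  qed
  finally have "real (card NS) < real n / 2" .
  hence "2 * card NS < n" by linarith
  with part show ?thesis unfolding SF_def by linarith
qed

theorem lemma1:
  fixes q :: nat
  assumes "prime q"
  shows "2 * card (S q) > q - 1"
proof -
  have q2: "q \<ge> 2" using assms prime_ge_2_nat by blast
  have sub: "{k\<in>{1..q-1}. sqf k} \<subseteq> S q"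
  proof
    fix k assume k: "k \<in> {k\<in>{1..q-1}. sqf k}"
    hence "k > 0" "k < q" "sqf k" using q2 by auto
    hence "k dvd primorial_below q" by (intro sqf_dvd_primorial)
    moreover have "k = k mod q" using \<open>k < q\<close> by simp
    ultimately show "k \<in> S q" unfolding S_def using \<open>k > 0\<close> by blast
  qed
  have fin: "finite (S q)"
  proof (rule finite_subset)
    show "S q \<subseteq> {..<q}" unfolding S_def using q2 by auto
  qed simp
  have "card {k\<in>{1..q-1}. sqf k} \<le> card (S q)" using card_mono[OF fin sub] .
  moreover have "2 * card {k\<in>{1..q-1}. sqf k} > q - 1" using q2 by (intro many_sqf) auto
  ultimately show ?thesis by linarith
qed

end
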